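(* Let $n\ge 4$ and $Q=\{0,\dots,n-1\}$. Then $\mathbf{W}_{\mathrm{sf}}(n)$ is the unique maximal semigroup of a suffix-free language in which no two states from $\{1,\dots,n-2\}$ are colliding; that is, $\mathbf{W}_{\mathrm{sf}}(n)$ is the transition semigroup of a minimal DFA (with state set $Q$, initial state $0$, empty state $n-1$) accepting a suffix-free language, no two states of $\{1,\dots,n-2\}$ collide in it, and every transition semigroup $T$ of such a DFA in which no two states of $\{1,\dots,n-2\}$ collide satisfies $T\subseteq\mathbf{W}_{\mathrm{sf}}(n)$.
   Context: A language $L$ is suffix-free if whenever $w\in L$ and $u\in L$ with $u$ a suffix of $w$, then $u=w$. Transformations act on the right ($qt$ is the image of $q$ under $t$). The transition semigroup of a DFA is the semigroup of transformations of its state set generated by the transformations induced by its letters. A minimal complete DFA of a suffix-free language with $n\ge2$ states has exactly one empty state (a state from which no final state is reachable); the states are labeled $Q=\{0,\dots,n-1\}$ with $0$ initial and $n-1$ empty. For a semigroup $T$ of transformations of $Q$, an unordered pair $\{p,q\}$ of distinct states of $Q\setminus\{0,n-1\}$ is colliding in $T$ if there exist $t\in T$ and $r\in Q\setminus\{0,n-1\}$ with $0t=p$ and $rt=q$. Define $\mathbf{B}_{\mathrm{sf}}(n)=\{t:Q\to Q \mid 0\notin Qt,\ (n-1)t=n-1,\ \text{and for all } j\ge1:\ 0t^j=n-1 \text{ or } 0t^j\neq qt^j \text{ for all } 0<q<n-1\}$ and $\mathbf{W}_{\mathrm{sf}}(n)=\{t\in\mathbf{B}_{\mathrm{sf}}(n)\mid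 0t=n-1 \text{ or } qt=n-1 \text{ for all } 1\le q\le n-2\}$. *)

theory Defs
  imports Main "HOL-Library.Sublist"
begin

text \<open>States are the naturals 0..n-1. A transformation of Q = {0..<n} is represented
 canonically as a function nat => nat mapping Q into Q and fixing every number >= n.
 Transformations act on the right: the word a1...ak maps q to delta ak (... (delta a1 q)).\<close>

definition is_transf :: "nat \<Rightarrow> (nat \<Rightarrow> nat) \<Rightarrow> bool" where
  "is_transf n t \<longleftrightarrow> (\<forall>q<n. t q < n) \<and> (\<forall>q. n \<le> q \<longrightarrow> t q = q)"

fun dw :: "('a \<Rightarrow> nat \<Rightarrow> nat) \<Rightarrow> 'a list \<Rightarrow> nat \<Rightarrow> nat" where
  "dw \<delta> [] = id"
| "dw \<delta> (a # w) = dw \<delta> w \<circ> \<delta> a"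

definition is_dfa :: "nat \<Rightarrow> 'a set \<Rightarrow> ('a \<Rightarrow> nat \<Rightarrow> nat) \<Rightarrow> nat set \<Rightarrow> bool" where
  "is_dfa n \<Sigma> \<delta> F \<longleftrightarrow> 0 < n \<and> finite \<Sigma> \<and> \<Sigma> \<noteq> {} \<and> F \<subseteq> {..<n} \<and> (\<forall>a\<in>\<Sigma>. is_transf n (\<delta> a))"

definition dfa_lang :: "'a set \<Rightarrow> ('a \<Rightarrow> nat \<Rightarrow> nat) \<Rightarrow> nat set \<Rightarrow> 'a list set" where
  "dfa_lang \<Sigma> \<delta> F = {w. w \<in> lists \<Sigma> \<and> dw \<delta> w 0 \<in> F}"

definition minimal_dfa :: "nat \<Rightarrow> 'a set \<Rightarrow> ('a \<Rightarrow> nat \<Rightarrow> nat) \<Rightarrow> nat set \<Rightarrow> bool" where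
  "minimal_dfa n \<Sigma> \<delta> F \<longleftrightarrow> is_dfa n \<Sigma> \<delta> F
     \<and> (\<forall>q<n. \<exists>w\<in>lists \<Sigma>. dw \<delta> w 0 = q)
     \<and> (\<forall>p<n. \<forall>q<n. p \<noteq> q \<longrightarrow> (\<exists>w\<in>lists \<Sigma>. (dw \<delta> w p \<in> F) \<noteq> (dw \<delta> w q \<in> F)))"

definition empty_state :: "'a set \<Rightarrow> ('a \<Rightarrow> nat \<Rightarrow> nat) \<Rightarrow> nat set \<Rightarrow> nat \<Rightarrow> bool" where
  "empty_state \<Sigma> \<delta> F q \<longleftrightarrow> (\<forall>w\<in>lists \<Sigma>. dw \<delta> w q \<notin> F)"

definition suffix_free :: "'a list set \<Rightarrow> bool" where
  "suffix_free L \<longleftrightarrow> (\<forall>w\<in>L. \<forall>u\<in>L. suffix u w \<longrightarrow> u = w)"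

definition min_sf_dfa :: "nat \<Rightarrow> 'a set \<Rightarrow> ('a \<Rightarrow> nat \<Rightarrow> nat) \<Rightarrow> nat set \<Rightarrow> bool" where
  "min_sf_dfa n \<Sigma> \<delta> F \<longleftrightarrow> minimal_dfa n \<Sigma> \<delta> F \<and> empty_state \<Sigma> \<delta> F (n - 1)
     \<and> suffix_free (dfa_lang \<Sigma> \<delta> F)"

definition trans_sg :: "'a set \<Rightarrow> ('a \<Rightarrow> nat \<Rightarrow> nat) \<Rightarrow> (nat \<Rightarrow> nat) set" where
  "trans_sg \<Sigma> \<delta> = {dw \<delta> w | w. w \<in> lists \<Sigma> \<and> w \<noteq> []}"

definition colliding :: "nat \<Rightarrow> (nat \<Rightarrow> nat) set \<Rightarrow> nat \<Rightarrow> nat \<Rightarrow> bool" where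
  "colliding n T p q \<longleftrightarrow> p \<noteq> q \<and> p \<in> {1..n-2} \<and> q \<in> {1..n-2} \<and>
     ((\<exists>t\<in>T. \<exists>r\<in>{1..n-2}. t 0 = p \<and> t r = q) \<or> (\<exists>t\<in>T. \<exists>r\<in>{1..n-2}. t 0 = q \<and> t r = p))"

definition no_colliding :: "nat \<Rightarrow> (nat \<Rightarrow> nat) set \<Rightarrow> bool" where
  "no_colliding n T \<longleftrightarrow> (\<forall>p q. \<not> colliding n T p q)"

definition B_sf :: "nat \<Rightarrow> (nat \<Rightarrow> nat) set" where
  "B_sf n = {t. is_transf n t \<and> (\<forall>q<n. t q \<noteq> 0) \<and> t (n - 1) = n - 1 \<and>
     (\<forall>j\<ge>1. (t ^^ j) 0 = n - 1 \<or> (\<forall>q. 0 < q \<and> q < n - 1 \<longrightarrow> (t ^^ j) 0 \<noteq> (t ^^ j) q))}"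

definition W_sf :: "nat \<Rightarrow> (nat \<Rightarrow> nat) set" where
  "W_sf n = {t \<in> B_sf n. t 0 = n - 1 \<or> (\<forall>q. 1 \<le> q \<and> q \<le> n - 2 \<longrightarrow> t q = n - 1)}"

end

theory Submission
  imports Defs "HOL-Library.FuncSet"
begin

lemma dw_append: "dw \<delta> (u @ v) = dw \<delta> v \<circ> dw \<delta> u"
  by (induction u) auto

lemma dw_append_app: "dw \<delta> (u @ v) q = dw \<delta> v (dw \<delta> u q)"
  by (simp add: dw_append)

lemma is_transf_comp: "is_transf n s \<Longrightarrow> is_transf n t \<Longrightarrow> is_transf n (t \<circ> s)"
  unfolding is_transf_def by auto

lemma is_transf_dw: "\<forall>a\<in>\<Sigma>. is_transf n (\<delta> a) \<Longrightarrow> w \<in> lists \<Sigma> \<Longrightarrow> is_transf n (dw \<delta> w)"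
proof (induction w)
  case Nil then show ?case by (simp add: is_transf_def)
next
  case (Cons a w)
  then have "is_transf n (dw \<delta> w \<circ> \<delta> a)" using is_transf_comp by auto
  then show ?case by (simp only: dw.simps)
qed

lemma pow_fix:
  assumes "t a = m" "t m = m"
  shows "(t ^^ Suc j) a = m"
  using assms by (induction j) auto

lemma W_char:
  assumes "n \<ge> 2"
  shows "t \<in> W_sf n \<longleftrightarrow> is_transf n t \<and> (\<forall>q<n. t q \<noteq> 0) \<and> t (n-1) = n-1 \<and>
     (t 0 = n-1 \<or> (\<forall>q. 1\<le>q \<and> q\<le>n-2 \<longrightarrow> t q = n-1))"
proof
  assume "t \<in> W_sf n"
  then have B: "t \<in> B_sf n" and C: "t 0 = n-1 \<or> (\<forall>q. 1\<le>q \<and> q\<le>n-2 \<longrightarrow> t q = n-1)"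
    unfolding W_sf_def by (simp_all only: mem_Collect_eq)
  from B have "is_transf n t \<and> (\<forall>q<n. t q \<noteq> 0) \<and> t (n - 1) = n - 1"
    unfolding B_sf_def mem_Collect_eq by simp
  then show "is_transf n t \<and> (\<forall>q<n. t q \<noteq> 0) \<and> t (n-1) = n-1 \<and>
     (t 0 = n-1 \<or> (\<forall>q. 1\<le>q \<and> q\<le>n-2 \<longrightarrow> t q = n-1))" using C by blast
next
  assume A: "is_transf n t \<and> (\<forall>q<n. t q \<noteq> 0) \<and> t (n-1) = n-1 \<and>
     (t 0 = n-1 \<or> (\<forall>q. 1\<le>q \<and> q\<le>n-2 \<longrightarrow> t q = n-1))"
  have P: "(t ^^ j) 0 = n - 1 \<or> (\<forall>q. 0 < q \<and> q < n - 1 \<longrightarrow> (t ^^ j) 0 \<noteq> (t ^^ j) q)"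
    if "j \<ge> 1" for j
  proof -
    define k where "k = j - 1"
    have k: "j = Suc k" using that unfolding k_def by simp
    show ?thesis
    proof (cases "t 0 = n-1")
      case True
      then show ?thesis using A k pow_fix[of t 0 "n-1" k] by auto
    next
      case False
      then have M: "\<forall>q. 1\<le>q \<and> q\<le>n-2 \<longrightarrow> t q = n-1" using A by auto
      have "(t ^^ j) q = n-1" if "0 < q" "q < n - 1" for q
        using pow_fix[of t q "n-1" k] M that A k by auto
      then show ?thesis by auto
    qed
  qed
  have P': "\<forall>j\<ge>1. (t ^^ j) 0 = n - 1 \<or> (\<forall>q. 0 < q \<and> q < n - 1 \<longrightarrow> (t ^^ j) 0 \<noteq> (t ^^ j) q)"
  proof (intro allI impI)
    fix j :: nat assume "j \<ge> 1" then show "(t ^^ j) 0 = n - 1 \<or> (\<forall>q. 0 < q \<and> q < n - 1 \<longrightarrow> (t ^^ j) 0 \<noteq> (t ^^ j) q)"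
      by (rule P)
  qed
  have A1: "is_transf n t" "\<forall>q<n. t q \<noteq> 0" "t (n-1) = n-1"
    and A2: "t 0 = n-1 \<or> (\<forall>q. 1\<le>q \<and> q\<le>n-2 \<longrightarrow> t q = n-1)"
    using A by (rule conjunct1, rule conjunct1[OF conjunct2], rule conjunct1[OF conjunct2[OF conjunct2]],
      rule conjunct2[OF conjunct2[OF conjunct2]])
  have "t \<in> B_sf n" unfolding B_sf_def mem_Collect_eq using A1 P' by (intro conjI)
  then show "t \<in> W_sf n" unfolding W_sf_def mem_Collect_eq using A2 by (intro conjI)
qed

lemma W_comp:
  assumes "n \<ge> 2" "s \<in> W_sf n" "t \<in> W_sf n"
  shows "t \<circ> s \<in> W_sf n"
proof -
  have S: "is_transf n s \<and> (\<forall>q<n. s q \<noteq> 0) \<and> s (n-1) = n-1 \<and>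
     (s 0 = n-1 \<or> (\<forall>q. 1\<le>q \<and> q\<le>n-2 \<longrightarrow> s q = n-1))" using W_char assms by blast
  have T: "is_transf n t \<and> (\<forall>q<n. t q \<noteq> 0) \<and> t (n-1) = n-1 \<and>
     (t 0 = n-1 \<or> (\<forall>q. 1\<le>q \<and> q\<le>n-2 \<longrightarrow> t q = n-1))" using W_char assms by blast
  have "\<forall>q<n. t (s q) \<noteq> 0" using S T unfolding is_transf_def by auto
  then show ?thesis using W_char[OF assms(1)] S T is_transf_comp by auto
qed

lemma dw_W:
  assumes "n \<ge> 2" "\<forall>a\<in>\<Sigma>. \<delta> a \<in> W_sf n"
  shows "w \<in> lists \<Sigma> \<Longrightarrow> w \<noteq> [] \<Longrightarrow> dw \<delta> w \<in> W_sf n"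
proof (induction w)
  case Nil then show ?case by simp
next
  case (Cons a w)
  have a: "a \<in> \<Sigma>" and w: "w \<in> lists \<Sigma>" using Cons.prems(1) by simp_all
  have da: "\<delta> a \<in> W_sf n" using a assms(2) by blast
  show ?case
  proof (cases "w = []")
    case True then show ?thesis using da by simp
  next
    case False
    then have "dw \<delta> w \<in> W_sf n" using Cons.IH w by blast
    then have "dw \<delta> w \<circ> \<delta> a \<in> W_sf n" using W_comp[OF assms(1) da] by blast
    then show ?thesis by (simp only: dw.simps)
  qed
qed

lemma finite_transf: "finite {t. is_transf n t}"
proof -
  let ?g = "\<lambda>g q. if q < n then g q else q"
  have "{t. is_transf n t} \<subseteq> ?g ` (Pi\<^sub>E {..<n} (\<lambda>_. {..<n}))"
  proof
    fix t assume "t \<in> {t. is_transf n t}"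
    then have t: "is_transf n t" by simp
    have "t x = ?g (restrict t {..<n}) x" for x using t unfolding is_transf_def by (cases "x < n") auto
    then have "t = ?g (restrict t {..<n})" by blast
    moreover have "restrict t {..<n} \<in> Pi\<^sub>E {..<n} (\<lambda>_. {..<n})" using t unfolding is_transf_def by auto
    ultimately show "t \<in> ?g ` (Pi\<^sub>E {..<n} (\<lambda>_. {..<n}))" by blast
  qed
  then show ?thesis by (rule finite_subset) (simp add: finite_PiE)
qed

lemma part1:
  assumes n4: "n \<ge> 4"
  shows "\<exists>(\<Sigma>::nat set) \<delta> F. min_sf_dfa n \<Sigma> \<delta> F \<and> trans_sg \<Sigma> \<delta> = W_sf n
            \<and> no_colliding n (trans_sg \<Sigma> \<delta>)"
proof -
  have n2: "n \<ge> 2" using n4 by simp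
  define W where "W = W_sf n"
  have finW: "finite W"
  proof -
    have "W \<subseteq> {t. is_transf n t}" unfolding W_def using W_char[OF n2] by blast
    then show ?thesis using finite_transf finite_subset by blast
  qed
  obtain h where h: "bij_betw h {0..<card W} W" using ex_bij_betw_nat_finite[OF finW] by blast
  define \<Sigma> where "\<Sigma> = {0..<card W}"
  define F where "F = {1::nat}"
  have hS: "\<forall>a\<in>\<Sigma>. h a \<in> W_sf n" using h unfolding \<Sigma>_def W_def bij_betw_def by auto
  have hsurj: "\<exists>a\<in>\<Sigma>. h a = t" if "t \<in> W_sf n" for t
  proof -
    have "t \<in> h ` \<Sigma>" using h that unfolding \<Sigma>_def W_def bij_betw_def by simp
    then show ?thesis by blast
  qed
  have single: "dw h [a] = h a" for a by simp
  have getw: "\<exists>w\<in>lists \<Sigma>. dw h w = t" if tW: "t \<in> W_sf n" for t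
  proof -
    obtain a where "a \<in> \<Sigma>" "h a = t" using hsurj[OF tW] by blast
    then show ?thesis by (intro bexI[of _ "[a]"]) auto
  qed
  have dwW: "dw h w \<in> W_sf n" if "w \<in> lists \<Sigma>" "w \<noteq> []" for w
    using dw_W[OF n2 hS] that by blast
  have TS: "trans_sg \<Sigma> h = W_sf n"
  proof
    show "trans_sg \<Sigma> h \<subseteq> W_sf n" unfolding trans_sg_def using dwW by blast
  next
    show "W_sf n \<subseteq> trans_sg \<Sigma> h"
    proof
      fix t assume "t \<in> W_sf n"
      then obtain a where "a \<in> \<Sigma>" "h a = t" using hsurj by blast
      then show "t \<in> trans_sg \<Sigma> h" unfolding trans_sg_def by (intro CollectI exI[of _ "[a]"]) auto
    qed
  qed
  have memW: "t \<in> W_sf n" if "is_transf n t" "\<forall>q<n. t q \<noteq> 0" "t (n-1) = n-1"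
     "t 0 = n-1 \<or> (\<forall>q. 1\<le>q \<and> q\<le>n-2 \<longrightarrow> t q = n-1)" for t
    using W_char[OF n2] that by blast
  define u where "u p = (\<lambda>x::nat. if x = 0 then p else if x < n then n - 1 else x)" for p
  have uW: "u p \<in> W_sf n" if "0 < p" "p < n" for p
  proof (rule memW)
    show "is_transf n (u p)" unfolding is_transf_def u_def using that n4 by auto
    show "\<forall>q<n. u p q \<noteq> 0" unfolding u_def using that n4 by auto
    show "u p (n-1) = n-1" unfolding u_def using n4 by auto
    show "u p 0 = n-1 \<or> (\<forall>q. 1\<le>q \<and> q\<le>n-2 \<longrightarrow> u p q = n-1)" unfolding u_def using n4 by auto
  qed
  define s where "s p = (\<lambda>x::nat. if x = p then 1 else if x < n then n - 1 else x)" for p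
  have sW: "s p \<in> W_sf n" if "0 < p" "p < n - 1" for p
  proof (rule memW)
    show "is_transf n (s p)" unfolding is_transf_def s_def using that n4 by auto
    show "\<forall>q<n. s p q \<noteq> 0" unfolding s_def using that n4 by auto
    show "s p (n-1) = n-1" unfolding s_def using that n4 by auto
    show "s p 0 = n-1 \<or> (\<forall>q. 1\<le>q \<and> q\<le>n-2 \<longrightarrow> s p q = n-1)" unfolding s_def using that n4 by auto
  qed
  have sep: "\<exists>w\<in>lists \<Sigma>. dw h w p = 1 \<and> dw h w q = n - 1"
    if "p < n" "q < n" "p \<noteq> q" "p \<noteq> n - 1" for p q
  proof (cases "p = 0")
    case True
    have "u 1 \<in> W_sf n" using uW n4 by simp
    then obtain w where w: "w \<in> lists \<Sigma>" "dw h w = u 1" using getw by blast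
    show ?thesis using w True that unfolding u_def by (intro bexI[of _ w]) auto
  next
    case False
    have "s p \<in> W_sf n" using sW False that by simp
    then obtain w where w: "w \<in> lists \<Sigma>" "dw h w = s p" using getw by blast
    show ?thesis using w False that unfolding s_def by (intro bexI[of _ w]) auto
  qed
  have fix_last: "dw h w (n-1) = n-1" if "w \<in> lists \<Sigma>" for w
  proof (cases "w = []")
    case True then show ?thesis by simp
  next
    case False
    then have "dw h w \<in> W_sf n" using dwW that by blast
    then show ?thesis using W_char[OF n2] by blast
  qed
  have dfa: "is_dfa n \<Sigma> h F"
    unfolding is_dfa_def
  proof (intro conjI)
    show "0 < n" using n4 by simp
    show "finite \<Sigma>" unfolding \<Sigma>_def by simp
    have "(\<lambda>x. if x < n then n - 1 else x) \<in> W_sf n"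
      using n4 by (intro memW) (auto simp: is_transf_def)
    then have "card W > 0" using finW unfolding W_def by (metis card_gt_0_iff empty_iff)
    then show "\<Sigma> \<noteq> {}" unfolding \<Sigma>_def by simp
    show "F \<subseteq> {..<n}" unfolding F_def using n4 by simp
    show "\<forall>a\<in>\<Sigma>. is_transf n (h a)" using hS W_char[OF n2] by blast
  qed
  have reach: "\<forall>q<n. \<exists>w\<in>lists \<Sigma>. dw h w 0 = q"
  proof (intro allI impI)
    fix q assume q: "q < n"
    show "\<exists>w\<in>lists \<Sigma>. dw h w 0 = q"
    proof (cases "q = 0")
      case True then show ?thesis by (intro bexI[of _ "[]"]) auto
    next
      case False
      then have "u q \<in> W_sf n" using uW q by simp
      then obtain w where w: "w \<in> lists \<Sigma>" "dw h w = u q" using getw by blast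
      then show ?thesis unfolding u_def by (intro bexI[of _ w]) auto
    qed
  qed
  have distg: "\<forall>p<n. \<forall>q<n. p \<noteq> q \<longrightarrow> (\<exists>w\<in>lists \<Sigma>. (dw h w p \<in> F) \<noteq> (dw h w q \<in> F))"
  proof (intro allI impI)
    fix p q assume pq: "p < n" "q < n" "p \<noteq> q"
    have n1: "n - 1 \<noteq> 1" using n4 by simp
    show "\<exists>w\<in>lists \<Sigma>. (dw h w p \<in> F) \<noteq> (dw h w q \<in> F)"
    proof (cases "p = n - 1")
      case False
      then obtain w where w: "w \<in> lists \<Sigma>" "dw h w p = 1" "dw h w q = n - 1" using sep pq by blast
      have "(dw h w p \<in> F) \<noteq> (dw h w q \<in> F)" unfolding F_def using w n1 by simp
      then show ?thesis using w(1) by blast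
    next
      case True
      then have "q \<noteq> n - 1" using pq by simp
      then obtain w where w: "w \<in> lists \<Sigma>" "dw h w q = 1" "dw h w p = n - 1" using sep pq by metis
      have "(dw h w p \<in> F) \<noteq> (dw h w q \<in> F)" unfolding F_def using w n1 by simp
      then show ?thesis using w(1) by blast
    qed
  qed
  have emp: "empty_state \<Sigma> h F (n - 1)"
  proof -
    have "n - 1 \<noteq> (1::nat)" using n4 by simp
    then show ?thesis unfolding empty_state_def F_def using fix_last by simp
  qed
  have sf: "suffix_free (dfa_lang \<Sigma> h F)"
    unfolding suffix_free_def
  proof (intro ballI impI)
    fix w u' assume wL: "w \<in> dfa_lang \<Sigma> h F" and uL: "u' \<in> dfa_lang \<Sigma> h F" and su: "suffix u' w"
    obtain v where v: "w = v @ u'" using su unfolding suffix_def by blast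
    show "u' = w"
    proof (cases "v = []")
      case True then show ?thesis using v by simp
    next
      case False
      have wl: "w \<in> lists \<Sigma>" "dw h w 0 = 1" using wL unfolding dfa_lang_def F_def by auto
      have ul: "u' \<in> lists \<Sigma>" "dw h u' 0 = 1" using uL unfolding dfa_lang_def F_def by auto
      have vl: "v \<in> lists \<Sigma>" using wl v by simp
      have une: "u' \<noteq> []" using ul by auto
      have vW: "dw h v \<in> W_sf n" using dwW vl False by blast
      have uW': "dw h u' \<in> W_sf n" using dwW ul une by blast
      define st where "st = dw h v 0"
      have st: "st < n" "st \<noteq> 0" using vW W_char[OF n2] n4 unfolding st_def is_transf_def by auto
      have "dw h u' 0 \<noteq> n - 1" using ul n4 by simp
      then have mid: "\<forall>q. 1\<le>q \<and> q\<le>n-2 \<longrightarrow> dw h u' q = n-1" using uW' W_char[OF n2] by blast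
      have l: "dw h u' (n-1) = n-1" using uW' W_char[OF n2] by blast
      have "dw h u' st = n - 1"
      proof (cases "st = n - 1")
        case True then show ?thesis using l by simp
      next
        case False then show ?thesis using mid st by auto
      qed
      then have "dw h w 0 = n - 1" using v unfolding st_def by (simp add: dw_append_app)
      then show ?thesis using wl n4 by simp
    qed
  qed
  have NC: "no_colliding n (trans_sg \<Sigma> h)"
    unfolding no_colliding_def colliding_def TS
  proof (intro allI notI)
    fix p q
    assume "p \<noteq> q \<and> p \<in> {1..n - 2} \<and> q \<in> {1..n - 2} \<and>
       ((\<exists>t\<in>W_sf n. \<exists>r\<in>{1..n - 2}. t 0 = p \<and> t r = q) \<or> (\<exists>t\<in>W_sf n. \<exists>r\<in>{1..n - 2}. t 0 = q \<and> t r = p))"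
    then obtain t r a b where t: "t \<in> W_sf n" "r \<in> {1..n-2}" "t 0 = a" "t r = b" "a \<in> {1..n-2}" "b \<in> {1..n-2}"
      by blast
    have "t 0 \<noteq> n - 1" using t n4 by auto
    then have "t r = n - 1" using t W_char[OF n2] by auto
    then show False using t n4 by auto
  qed
  have "min_sf_dfa n \<Sigma> h F"
    unfolding min_sf_dfa_def minimal_dfa_def using dfa reach distg emp sf by blast
  then show ?thesis using TS NC by blast
qed
lemma part2:
  fixes \<Sigma> :: "'a set"
  assumes n4: "n \<ge> 4" and M: "min_sf_dfa n \<Sigma> \<delta> F" and NC: "no_colliding n (trans_sg \<Sigma> \<delta>)"
  shows "trans_sg \<Sigma> \<delta> \<subseteq> W_sf n"
proof
  fix t assume tT: "t \<in> trans_sg \<Sigma> \<delta>"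
  then obtain w where tw: "t = dw \<delta> w" and wS: "w \<in> lists \<Sigma>" and wne: "w \<noteq> []"
    unfolding trans_sg_def by auto
  have dfa: "is_dfa n \<Sigma> \<delta> F" and reach: "\<forall>q<n. \<exists>w\<in>lists \<Sigma>. dw \<delta> w 0 = q"
    and dist: "\<forall>p<n. \<forall>q<n. p \<noteq> q \<longrightarrow> (\<exists>w\<in>lists \<Sigma>. (dw \<delta> w p \<in> F) \<noteq> (dw \<delta> w q \<in> F))"
    and emp: "empty_state \<Sigma> \<delta> F (n - 1)" and sf: "suffix_free (dfa_lang \<Sigma> \<delta> F)"
    using M unfolding min_sf_dfa_def minimal_dfa_def by auto
  have tr: "\<forall>a\<in>\<Sigma>. is_transf n (\<delta> a)" using dfa unfolding is_dfa_def by auto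
  have tt: "is_transf n t" using is_transf_dw[OF tr wS] tw by simp
  have uniq: "e = n - 1" if e_lt: "e < n" and e_emp: "empty_state \<Sigma> \<delta> F e" for e
  proof (rule ccontr)
    assume "e \<noteq> n - 1"
    moreover have "n - 1 < n" using n4 by simp
    ultimately obtain z where "z \<in> lists \<Sigma>" "(dw \<delta> z e \<in> F) \<noteq> (dw \<delta> z (n-1) \<in> F)"
      using dist[rule_format, OF e_lt] by metis
    then show False using e_emp emp unfolding empty_state_def by blast
  qed
  have nonempty: "\<exists>z\<in>lists \<Sigma>. dw \<delta> z p \<in> F" if "p < n" "p \<noteq> n - 1" for p
  proof (rule ccontr)
    assume "\<not> (\<exists>z\<in>lists \<Sigma>. dw \<delta> z p \<in> F)"
    then have "empty_state \<Sigma> \<delta> F p" unfolding empty_state_def by blast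
    then show False using uniq[OF that(1)] that(2) by blast
  qed
  have "(0::nat) < n" "(0::nat) \<noteq> n - 1" using n4 by simp_all
  then obtain z0 where z0: "z0 \<in> lists \<Sigma>" "dw \<delta> z0 0 \<in> F" using nonempty[of 0] by blast
  have no0: "dw \<delta> x 0 \<noteq> 0" if "x \<in> lists \<Sigma>" "x \<noteq> []" for x
  proof
    assume x0: "dw \<delta> x 0 = 0"
    have "x @ z0 \<in> dfa_lang \<Sigma> \<delta> F" using z0 x0 that unfolding dfa_lang_def by (simp add: dw_append_app)
    moreover have "z0 \<in> dfa_lang \<Sigma> \<delta> F" using z0 unfolding dfa_lang_def by simp
    moreover have "suffix z0 (x @ z0)" by (simp add: suffix_def)
    ultimately have "z0 = x @ z0" using sf unfolding suffix_free_def by blast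
    then show False using that by simp
  qed
  have A1: "\<forall>q<n. t q \<noteq> 0"
  proof (intro allI impI)
    fix q assume "q < n"
    then obtain v where v: "v \<in> lists \<Sigma>" "dw \<delta> v 0 = q" using reach by auto
    have "dw \<delta> (v @ w) 0 \<noteq> 0" using no0[of "v @ w"] v wS wne by simp
    then show "t q \<noteq> 0" using v tw by (simp add: dw_append_app)
  qed
  have A2: "t (n-1) = n-1"
  proof -
    have lt: "t (n-1) < n" using tt n4 unfolding is_transf_def by auto
    have "empty_state \<Sigma> \<delta> F (t (n-1))" unfolding empty_state_def
    proof
      fix z assume "z \<in> lists \<Sigma>"
      then have "w @ z \<in> lists \<Sigma>" using wS by simp
      then have "dw \<delta> (w @ z) (n-1) \<notin> F" using emp unfolding empty_state_def by blast
      then show "dw \<delta> z (t (n - 1)) \<notin> F" using tw by (simp add: dw_append_app)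
    qed
    then show ?thesis using uniq lt by blast
  qed
  have A3: "t 0 = n-1 \<or> (\<forall>q. 1\<le>q \<and> q\<le>n-2 \<longrightarrow> t q = n-1)"
  proof (rule ccontr)
    assume "\<not> ?thesis"
    then obtain r where p: "t 0 \<noteq> n - 1" and r: "1 \<le> r" "r \<le> n - 2" and q: "t r \<noteq> n-1" by auto
    define p' where "p' = t 0"
    define q' where "q' = t r"
    have p'n: "p' < n" "p' \<noteq> 0" using tt A1 n4 unfolding p'_def is_transf_def by auto
    have q'n: "q' < n" "q' \<noteq> 0" using tt A1 n4 r unfolding q'_def is_transf_def by auto
    show False
    proof (cases "p' = q'")
      case False
      have "p' \<in> {1..n-2}" "q' \<in> {1..n-2}" "r \<in> {1..n-2}"
        using p'n q'n p q r unfolding p'_def q'_def by auto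
      then have "colliding n (trans_sg \<Sigma> \<delta>) p' q'"
        unfolding colliding_def using False tT unfolding p'_def q'_def by blast
      then show False using NC unfolding no_colliding_def by blast
    next
      case True
      have "r < n" using r n4 by simp
      then obtain v where v: "v \<in> lists \<Sigma>" "dw \<delta> v 0 = r" using reach by blast
      have vne: "v \<noteq> []" using v r by auto
      obtain z where z: "z \<in> lists \<Sigma>" "dw \<delta> z p' \<in> F" using nonempty[of p'] p'n p p'_def by auto
      have "w @ z \<in> dfa_lang \<Sigma> \<delta> F" using z wS tw unfolding dfa_lang_def p'_def
        by (simp add: dw_append_app)
      moreover have "v @ (w @ z) \<in> dfa_lang \<Sigma> \<delta> F" using z wS tw v True unfolding dfa_lang_def p'_def q'_def
        by (simp add: dw_append_app)
      moreover have "suffix (w @ z) (v @ (w @ z))" by (simp add: suffix_def)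
      ultimately have "w @ z = v @ (w @ z)" using sf unfolding suffix_free_def by blast
      then show False using vne by simp
    qed
  qed
  show "t \<in> W_sf n" using W_char[of n t] n4 tt A1 A2 A3 by auto
qed
theorem proposition3:
  fixes n :: nat
  assumes "n \<ge> 4"
  shows "(\<exists>(\<Sigma>::nat set) \<delta> F. min_sf_dfa n \<Sigma> \<delta> F \<and> trans_sg \<Sigma> \<delta> = W_sf n
            \<and> no_colliding n (trans_sg \<Sigma> \<delta>))
       \<and> (\<forall>(\<Sigma>::'a set) \<delta> F. min_sf_dfa n \<Sigma> \<delta> F \<and> no_colliding n (trans_sg \<Sigma> \<delta>)
            \<longrightarrow> trans_sg \<Sigma> \<delta> \<subseteq> W_sf n)"
  using part1[OF assms] part2[OF assms] by blast

end
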